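(* Let $f_1,\dots,f_n:\mathbb{R}^p\to\mathbb{R}$ be continuously differentiable and $L$-smooth, let $g=\frac1n\sum_if_i\in\mathcal S(m,L)$ with $m>0$ and minimizer $x^*$, and let $i_k$ be sampled IID uniformly from $\{1,\dots,n\}$. Let $\gamma=-m$ if every $f_i\in\mathcal F(m,L)$, $\gamma=0$ if every $f_i\in\mathcal F(0,L)$, and $\gamma=L$ if the $f_i$ are only assumed $L$-smooth. Consider Finito with stepsize $\alpha>0$ and define $v^k=\frac1n\sum_{i=1}^nx_i^k-\alpha\sum_{i=1}^ny_i^k$. Given any testing rate with $1-\frac1n\le\rho^2\le1$, if there exist positive scalars $p_1,p_4$ and nonnegative scalars $\lambda_1,\lambda_2$ such that $$\alpha^2-2\lambda_2+p_1<0,$$ $$n(1-\rho^2)p_1-p_1+2\alpha^2-\frac{2\alpha^4}{\alpha^2-2\lambda_2+p_1}\le0,$$ $$n(1-\rho^2)p_4-p_4+\frac2{n^2}-\frac{2\alpha^2}{n^2(\alpha^2-2\lambda_2+p_1)}\le0,$$ $$p_4-\rho^2+2L\gamma\lambda_2-2Lm\lambda_1+1-\frac{((L+m)\lambda_1+(L-\gamma)\lambda_2-\alpha)^2}{\alpha^2-2\lambda_1-2\lambda_2+p_1}\le0,$$ then Finito with any initial $x_i^0,y_i^0\in\mathbb{R}^p$ satisfies $$\mathbb{E}\left[p_4\sum_{i=1}^n\|x_i^k-x^*\|^2+p_1\sum_{i=1}^n\|y_i^k-\nabla f_i(x^* )\|^2+\|v^k-x^*\|^2\right]\le\rho^{2k}R^0,$$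 where $R^0=p_4\sum_i\|x_i^0-x^*\|^2+p_1\sum_i\|y_i^0-\nabla f_i(x^* )\|^2+\|v^0-x^*\|^2$.
   Context: A continuously differentiable $f:\mathbb{R}^p\to\mathbb{R}$ is $L$-smooth if $\|\nabla f(x)-\nabla f(y)\|\le L\|x-y\|$; $\mathcal F(m,L)$ denotes the continuously differentiable, $L$-smooth, $m$-strongly convex functions; $\mathcal F(0,L)$ the convex $L$-smooth ones. $\mathcal S(m,L)$ is the set of continuously differentiable $g$ with a unique $x^*$ such that $\nabla g(x^* )=0$ and, for all $x$, $\begin{bmatrix}x-x^*\\\nabla g(x)\end{bmatrix}^T\begin{bmatrix}-2mLI_p&(L+m)I_p\\(L+m)I_p&-2I_p\end{bmatrix}\begin{bmatrix}x-x^*\\\nabla g(x)\end{bmatrix}\ge0$. Finito: at step $k$, $x_i^{k+1}=\frac1n\sum_{j=1}^nx_j^k-\alpha\sum_{j=1}^ny_j^k$ if $i=i_k$ and $x_i^{k+1}=x_i^k$ otherwise; then $y_i^{k+1}=\nabla f_i(x_i^{k+1})$ if $i=i_k$ and $y_i^{k+1}=y_i^k$ otherwise. Expectation is over the random indices. *)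

theory Defs
  imports "HOL-Analysis.Analysis"
begin

definition strongly_convex :: "real \<Rightarrow> ('a::real_normed_vector \<Rightarrow> real) \<Rightarrow> bool" where
  "strongly_convex m f \<longleftrightarrow>
     (\<forall>x y. \<forall>t::real. 0 \<le> t \<and> t \<le> 1 \<longrightarrow>
        f (t *\<^sub>R x + (1 - t) *\<^sub>R y) \<le> t * f x + (1 - t) * f y - m / 2 * t * (1 - t) * (norm (x - y))\<^sup>2)"

definition smooth_C1 :: "real \<Rightarrow> ('a::euclidean_space \<Rightarrow> real) \<Rightarrow> ('a \<Rightarrow> 'a) \<Rightarrow> bool" where
  "smooth_C1 L f df \<longleftrightarrow> (\<forall>x. GDERIV f x :> df x) \<and> continuous_on UNIV df \<and>
     (\<forall>x y. norm (df x - df y) \<le> L * norm (x - y))"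

definition in_S :: "real \<Rightarrow> real \<Rightarrow> ('a::euclidean_space \<Rightarrow> real) \<Rightarrow> bool" where
  "in_S m L g \<longleftrightarrow> (\<exists>dg. (\<forall>x. GDERIV g x :> dg x) \<and> continuous_on UNIV dg \<and>
     (\<exists>!xs. dg xs = 0 \<and>
        (\<forall>x. - 2 * m * L * (norm (x - xs))\<^sup>2 + 2 * (L + m) * inner (x - xs) (dg x)
               - 2 * (norm (dg x))\<^sup>2 \<ge> 0)))"

text \<open>One Finito step with sampled index j (indices 0..n-1); state = (x, y).\<close>
definition finito_step :: "nat \<Rightarrow> real \<Rightarrow> (nat \<Rightarrow> 'a \<Rightarrow> 'a) \<Rightarrow>
    (nat \<Rightarrow> 'a::real_vector) \<times> (nat \<Rightarrow> 'a) \<Rightarrow> nat \<Rightarrow> (nat \<Rightarrow> 'a) \<times> (nat \<Rightarrow> 'a)" where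
  "finito_step n \<alpha> df st j =
     (let x = fst st; y = snd st;
          v = (1 / real n) *\<^sub>R (\<Sum>i<n. x i) - \<alpha> *\<^sub>R (\<Sum>i<n. y i)
      in (x(j := v), y(j := df j v)))"

definition finito :: "nat \<Rightarrow> real \<Rightarrow> (nat \<Rightarrow> 'a \<Rightarrow> 'a) \<Rightarrow>
    (nat \<Rightarrow> 'a::real_vector) \<times> (nat \<Rightarrow> 'a) \<Rightarrow> nat list \<Rightarrow> (nat \<Rightarrow> 'a) \<times> (nat \<Rightarrow> 'a)" where
  "finito n \<alpha> df st0 js = foldl (finito_step n \<alpha> df) st0 js"

definition lyap :: "nat \<Rightarrow> real \<Rightarrow> real \<Rightarrow> real \<Rightarrow> (nat \<Rightarrow> 'a \<Rightarrow> 'a) \<Rightarrow> 'a::real_inner \<Rightarrow>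
    (nat \<Rightarrow> 'a) \<times> (nat \<Rightarrow> 'a) \<Rightarrow> real" where
  "lyap n \<alpha> p1 p4 df xs st =
     (let x = fst st; y = snd st;
          v = (1 / real n) *\<^sub>R (\<Sum>i<n. x i) - \<alpha> *\<^sub>R (\<Sum>i<n. y i)
      in p4 * (\<Sum>i<n. (norm (x i - xs))\<^sup>2) + p1 * (\<Sum>i<n. (norm (y i - df i xs))\<^sup>2)
         + (norm (v - xs))\<^sup>2)"

text \<open>Expectation over k IID uniform indices in {0..<n}: average over all n^k sequences.\<close>
definition expect_uniform :: "nat \<Rightarrow> nat \<Rightarrow> (nat list \<Rightarrow> real) \<Rightarrow> real" where
  "expect_uniform n k F =
     (\<Sum>js\<in>{js. length js = k \<and> set js \<subseteq> {..<n}}. F js) / real n ^ k"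

end

theory Submission
  imports Defs "HOL-Analysis.Analysis"
begin


lemma line_deriv:
  fixes f :: "'a::real_inner \<Rightarrow> real"
  assumes "\<And>x. GDERIV f x :> g x"
  shows "((\<lambda>t. f (w + t *\<^sub>R d)) has_real_derivative inner d (g (w + t *\<^sub>R d))) (at t within S)"
proof -
  have 1: "((\<lambda>t. w + t *\<^sub>R d) has_derivative (\<lambda>h. h *\<^sub>R d)) (at t within S)"
    by (auto intro!: derivative_eq_intros)
  have 2: "(f has_derivative (\<lambda>h. inner h (g (w + t *\<^sub>R d)))) (at (w + t *\<^sub>R d))"
    using assms[of "w + t *\<^sub>R d"] by (simp add: gderiv_def)
  have "((\<lambda>t. f (w + t *\<^sub>R d)) has_derivative (\<lambda>h. inner (h *\<^sub>R d) (g (w + t *\<^sub>R d)))) (at t within S)"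
    using has_derivative_compose[OF 1 2] by simp
  moreover have "(\<lambda>h. inner (h *\<^sub>R d) (g (w + t *\<^sub>R d))) = (*) (inner d (g (w + t *\<^sub>R d)))"
    by (auto simp: fun_eq_iff)
  ultimately show ?thesis by (simp add: has_field_derivative_def)
qed

lemma descent:
  fixes f :: "'a::real_inner \<Rightarrow> real"
  assumes gd: "\<And>x. GDERIV f x :> g x"
    and lip: "\<And>x y. norm (g x - g y) \<le> L * norm (x - y)"
  shows "f z \<le> f w + inner (g w) (z - w) + L / 2 * (norm (z - w))\<^sup>2"
proof -
  define d where "d = z - w"
  define \<phi> where "\<phi> t = f (w + t *\<^sub>R d) - t * inner (g w) d - L / 2 * t\<^sup>2 * (norm d)\<^sup>2" for t
  define \<phi>' where "\<phi>' t = inner d (g (w + t *\<^sub>R d)) - inner (g w) d - L * t * (norm d)\<^sup>2" for t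
  have D: "(\<phi> has_real_derivative \<phi>' t) (at t)" for t
    unfolding \<phi>_def \<phi>'_def
    by (rule derivative_eq_intros line_deriv[OF gd] | simp)+
  obtain s where s: "0 < s" "s < 1" "\<phi> 1 - \<phi> 0 = (1 - 0) * \<phi>' s"
    using MVT2[of 0 1 \<phi> \<phi>'] D by auto
  have "inner d (g (w + s *\<^sub>R d)) - inner (g w) d = inner (g (w + s *\<^sub>R d) - g w) d"
    by (metis inner_commute inner_diff_left)
  also have "\<dots> \<le> norm (g (w + s *\<^sub>R d) - g w) * norm d"
    by (rule norm_cauchy_schwarz)
  also have "\<dots> \<le> L * norm (s *\<^sub>R d) * norm d"
    using lip[of "w + s *\<^sub>R d" w] by (simp add: mult_right_mono)
  also have "\<dots> = L * s * (norm d)\<^sup>2"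
    using s by (simp add: power2_eq_square)
  finally have "\<phi>' s \<le> 0" unfolding \<phi>'_def by simp
  then have "\<phi> 1 \<le> \<phi> 0" using s by simp
  then show ?thesis unfolding \<phi>_def d_def by (simp add: inner_commute)
qed


lemma first_order:
  fixes f :: "'a::real_inner \<Rightarrow> real"
  assumes gd: "\<And>x. GDERIV f x :> g x"
    and sc: "\<And>t. 0 < t \<Longrightarrow> t < 1 \<Longrightarrow>
       f (w + t *\<^sub>R (z - w)) \<le> t * f z + (1 - t) * f w - \<mu> / 2 * t * (1 - t) * (norm (z - w))\<^sup>2"
  shows "f w + inner (g w) (z - w) + \<mu> / 2 * (norm (z - w))\<^sup>2 \<le> f z"
proof -
  define d where "d = z - w"
  have "((\<lambda>t. f (w + t *\<^sub>R d)) has_real_derivative inner d (g (w + 0 *\<^sub>R d))) (at 0 within {0<..})"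
    by (rule line_deriv[OF gd])
  then have L1: "((\<lambda>t. (f (w + t *\<^sub>R d) - f w) / t) \<longlongrightarrow> inner d (g w)) (at_right 0)"
    by (simp add: has_field_derivative_iff)
  have L2: "((\<lambda>t. f z - f w - \<mu> / 2 * (1 - t) * (norm d)\<^sup>2) \<longlongrightarrow> f z - f w - \<mu> / 2 * (1 - 0) * (norm d)\<^sup>2) (at_right 0)"
    by (intro tendsto_intros)
  have ev: "\<forall>\<^sub>F t in at_right 0. (f (w + t *\<^sub>R d) - f w) / t \<le> f z - f w - \<mu> / 2 * (1 - t) * (norm d)\<^sup>2"
  proof -
    have "\<forall>\<^sub>F t in at_right (0::real). 0 < t \<and> t < 1"
      by (intro eventually_conj eventually_at_right_less) (simp add: eventually_at_right_field, rule exI[of _ 1], auto)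
    then show ?thesis
    proof (rule eventually_mono)
      fix t :: real assume t: "0 < t \<and> t < 1"
      have "f (w + t *\<^sub>R d) - f w \<le> t * (f z - f w - \<mu> / 2 * (1 - t) * (norm d)\<^sup>2)"
        using sc[of t] t unfolding d_def by (simp add: algebra_simps)
      then show "(f (w + t *\<^sub>R d) - f w) / t \<le> f z - f w - \<mu> / 2 * (1 - t) * (norm d)\<^sup>2"
        using t by (simp add: divide_le_eq mult.commute)
    qed
  qed
  have "inner d (g w) \<le> f z - f w - \<mu> / 2 * (1 - 0) * (norm d)\<^sup>2"
    by (rule tendsto_le[OF _ L2 L1 ev]) simp
  then show ?thesis unfolding d_def by (simp add: inner_commute)
qed


lemma coco_half:
  fixes f :: "'a::real_inner \<Rightarrow> real"
  assumes lower: "\<And>w z. f w + inner (g w) (z - w) \<le> f z"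
    and upper: "\<And>w z. f z \<le> f w + inner (g w) (z - w) + M / 2 * (norm (z - w))\<^sup>2"
    and M: "M > 0"
  shows "f x - f y + inner (g x) (y - x) \<le> - (1 / (2 * M)) * (norm (g y - g x))\<^sup>2"
proof -
  define \<delta> where "\<delta> = g y - g x"
  define z where "z = y - (1 / M) *\<^sub>R \<delta>"
  have 1: "f x + inner (g x) (z - x) \<le> f z" by (rule lower)
  have 2: "f z \<le> f y + inner (g y) (z - y) + M / 2 * (norm (z - y))\<^sup>2" by (rule upper)
  have e1: "inner (g x) (z - x) = inner (g x) (y - x) - (1 / M) * inner (g x) \<delta>"
    unfolding z_def by (simp add: inner_diff_right algebra_simps)
  have e2: "inner (g y) (z - y) = - (1 / M) * inner (g y) \<delta>"
    unfolding z_def by (simp add: inner_diff_right)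
  have e3: "M / 2 * (norm (z - y))\<^sup>2 = (1 / (2 * M)) * (norm \<delta>)\<^sup>2"
    unfolding z_def using M by (simp add: power2_eq_square field_simps)
  have e4: "inner (g y) \<delta> - inner (g x) \<delta> = (norm \<delta>)\<^sup>2"
    unfolding \<delta>_def by (simp add: power2_norm_eq_inner inner_diff_left)
  have "f x - f y + inner (g x) (y - x) \<le> (1 / M) * (inner (g x) \<delta> - inner (g y) \<delta>) + (1 / (2 * M)) * (norm \<delta>)\<^sup>2"
    using 1 2 e1 e2 e3 by (simp add: algebra_simps)
  also have "\<dots> = - (1 / (2 * M)) * (norm \<delta>)\<^sup>2"
    using e4 M by (simp add: field_simps)
  finally show ?thesis unfolding \<delta>_def .
qed

lemma coco:
  fixes f :: "'a::real_inner \<Rightarrow> real"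
  assumes lower: "\<And>w z. f w + inner (g w) (z - w) \<le> f z"
    and upper: "\<And>w z. f z \<le> f w + inner (g w) (z - w) + M / 2 * (norm (z - w))\<^sup>2"
    and M: "M > 0"
  shows "(norm (g y - g x))\<^sup>2 \<le> M * inner (g y - g x) (y - x)"
proof -
  have 1: "f x - f y + inner (g x) (y - x) \<le> - (1 / (2 * M)) * (norm (g y - g x))\<^sup>2"
    by (rule coco_half[OF lower upper M])
  have 2: "f y - f x + inner (g y) (x - y) \<le> - (1 / (2 * M)) * (norm (g x - g y))\<^sup>2"
    by (rule coco_half[OF lower upper M])
  have n: "norm (g x - g y) = norm (g y - g x)" by (rule norm_minus_commute)
  have "inner (g x) (y - x) + inner (g y) (x - y) = - inner (g y - g x) (y - x)"
    by (simp add: inner_diff_left inner_diff_right algebra_simps)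
  then have "(1 / M) * (norm (g y - g x))\<^sup>2 \<le> inner (g y - g x) (y - x)"
    using 1 2 n by (simp add: field_simps)
  then show ?thesis using M by (simp add: field_simps)
qed


lemma Tineq:
  fixes f :: "'a::real_inner \<Rightarrow> real"
  assumes gd: "\<And>x. GDERIV f x :> g x"
    and lip: "\<And>x y. norm (g x - g y) \<le> L * norm (x - y)"
    and FO: "\<And>w z. f w + inner (g w) (z - w) + \<mu> / 2 * (norm (z - w))\<^sup>2 \<le> f z"
    and mu: "\<mu> \<ge> 0"
  shows "(L + \<mu>) * inner (v - x) (g v - g x) - (norm (g v - g x))\<^sup>2 - \<mu> * L * (norm (v - x))\<^sup>2 \<ge> 0"
proof -
  define \<psi> where "\<psi> z = f z - \<mu> / 2 * (norm z)\<^sup>2" for z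
  define h where "h z = g z - \<mu> *\<^sub>R z" for z
  define u where "u = v - x"
  define c where "c = g v - g x"
  define M0 where "M0 = max (L - \<mu>) 0"
  have sq: "(norm z)\<^sup>2 - (norm w)\<^sup>2 - 2 * inner w (z - w) = (norm (z - w))\<^sup>2" for z w :: 'a
    by (simp add: power2_norm_eq_inner inner_diff_left inner_diff_right inner_commute)
  have sqm: "\<mu> / 2 * (norm z)\<^sup>2 - \<mu> / 2 * (norm w)\<^sup>2 - \<mu> * inner w (z - w) = \<mu> / 2 * (norm (z - w))\<^sup>2" for z w :: 'a
  proof -
    have "\<mu> / 2 * ((norm z)\<^sup>2 - (norm w)\<^sup>2 - 2 * inner w (z - w)) = \<mu> / 2 * (norm (z - w))\<^sup>2"
      by (simp only: sq)
    then show ?thesis by (simp add: algebra_simps)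
  qed
  have lower: "\<psi> w + inner (h w) (z - w) \<le> \<psi> z" for w z
  proof -
    have "inner (h w) (z - w) = inner (g w) (z - w) - \<mu> * inner w (z - w)"
      unfolding h_def by (simp add: inner_diff_left)
    then show ?thesis using FO[of w z] sqm[of z w] unfolding \<psi>_def by linarith
  qed
  have upper: "\<psi> z \<le> \<psi> w + inner (h w) (z - w) + (M0 + e) / 2 * (norm (z - w))\<^sup>2" if e: "e > 0" for w z e
  proof -
    have d: "f z \<le> f w + inner (g w) (z - w) + L / 2 * (norm (z - w))\<^sup>2"
      by (rule descent[OF gd lip])
    have "inner (h w) (z - w) = inner (g w) (z - w) - \<mu> * inner w (z - w)"
      unfolding h_def by (simp add: inner_diff_left)
    moreover have "(L - \<mu>) / 2 * (norm (z - w))\<^sup>2 \<le> (M0 + e) / 2 * (norm (z - w))\<^sup>2"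
      using e by (intro mult_right_mono) (auto simp: M0_def max_def)
    moreover have "(L - \<mu>) / 2 * (norm (z - w))\<^sup>2 = L / 2 * (norm (z - w))\<^sup>2 - \<mu> / 2 * (norm (z - w))\<^sup>2"
      by (simp add: diff_divide_distrib left_diff_distrib)
    ultimately show ?thesis using d sqm[of z w] unfolding \<psi>_def by linarith
  qed
  have hv: "h v - h x = c - \<mu> *\<^sub>R u" unfolding h_def c_def u_def by (simp add: algebra_simps)
  have co: "(norm (c - \<mu> *\<^sub>R u))\<^sup>2 \<le> (M0 + e) * inner (c - \<mu> *\<^sub>R u) u" if e: "e > 0" for e
  proof -
    have "M0 + e > 0" using e by (simp add: M0_def)
    from coco[of \<psi> h "M0 + e", OF lower upper[OF e] this, of v x] show ?thesis
      using hv unfolding u_def by simp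
  qed
  define X where "X = inner (c - \<mu> *\<^sub>R u) u"
  define Y where "Y = (norm (c - \<mu> *\<^sub>R u))\<^sup>2"
  have Y0: "Y \<ge> 0" unfolding Y_def by simp
  have M00: "M0 \<ge> 0" unfolding M0_def by simp
  have key: "Y \<le> M0 * X"
  proof (cases "X > 0")
    case True
    show ?thesis
    proof (rule field_le_epsilon)
      fix e :: real assume e: "0 < e"
      have "Y \<le> (M0 + e / X) * X" using co[of "e / X"] e True unfolding X_def Y_def by simp
      then show "Y \<le> M0 * X + e" using True by (simp add: algebra_simps)
    qed
  next
    case False
    have "Y \<le> (M0 + 1) * X" using co[of 1] unfolding X_def Y_def by simp
    moreover have "(M0 + 1) * X \<le> 0" using False M00 by (intro mult_nonneg_nonpos) auto
    ultimately have "0 \<le> (M0 + 1) * X" using Y0 by linarith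
    then have "0 \<le> X" using M00 by (simp add: zero_le_mult_iff)
    then have "0 \<le> M0 * X" using M00 by simp
    moreover have "Y \<le> 0" using \<open>Y \<le> (M0 + 1) * X\<close> \<open>(M0 + 1) * X \<le> 0\<close> by linarith
    ultimately show ?thesis by linarith
  qed
  have exp: "Y = (norm c)\<^sup>2 - 2 * \<mu> * inner u c + \<mu>\<^sup>2 * (norm u)\<^sup>2"
    "X = inner u c - \<mu> * (norm u)\<^sup>2"
    unfolding X_def Y_def
    by (simp_all add: power2_norm_eq_inner inner_diff_left inner_diff_right inner_commute[of c u] power2_eq_square[of \<mu>] algebra_simps)
  show ?thesis
  proof (cases "L \<ge> \<mu>")
    case True
    then have "M0 = L - \<mu>" by (simp add: M0_def)
    then have "(norm c)\<^sup>2 - 2 * \<mu> * inner u c + \<mu>\<^sup>2 * (norm u)\<^sup>2 \<le> (L - \<mu>) * (inner u c - \<mu> * (norm u)\<^sup>2)"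
      using key exp by simp
    then show ?thesis unfolding u_def[symmetric] c_def[symmetric] by (simp add: algebra_simps power2_eq_square)
  next
    case False
    then have "M0 = 0" by (simp add: M0_def)
    then have "Y = 0" using key Y0 by simp
    then have "c = \<mu> *\<^sub>R u" unfolding Y_def by simp
    moreover have "norm c \<le> L * norm u" using lip[of v x] unfolding c_def u_def .
    ultimately have "\<mu> * norm u \<le> L * norm u" using mu by simp
    then have "(\<mu> - L) * norm u \<le> 0" by (simp add: algebra_simps)
    then have "norm u = 0" using False by (simp add: mult_le_0_iff)
    then have "u = 0" "c = 0" using \<open>c = \<mu> *\<^sub>R u\<close> by auto
    then show ?thesis unfolding u_def[symmetric] c_def[symmetric] by simp
  qed
qed


lemma final_scalar:
  fixes N p1 p4 \<alpha> r2 l1 l2 L m \<gamma> A B C na nb nc Au Bu Cd nu iuc SW Y Z q r :: real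
  assumes hA: "A = N * na + Au" and hB: "B = N * nb + Bu" and hC: "C = N * nc + Cd"
    and hSW: "SW = N * nu - 2 * \<alpha> * N * iuc + N * \<alpha>\<^sup>2 * nc + Y"
    and hY: "Y + (p1 - 2 * l2) * Cd \<le> q * Z"
    and hZ: "Z \<le> r * Au + 2 * \<alpha>\<^sup>2 * Bu"
    and q: "q \<ge> 0"
    and S: "- 2 * m * L * nu + 2 * (L + m) * iuc - 2 * nc \<ge> 0"
    and T: "(L - \<gamma>) * N * iuc - C + N * \<gamma> * L * nu \<ge> 0"
    and M: "(p4 - r2 + 2 * L * \<gamma> * l2 - 2 * L * m * l1 + 1) * nu
            + 2 * ((L + m) * l1 + (L - \<gamma>) * l2 - \<alpha>) * iuc
            + (\<alpha>\<^sup>2 - 2 * l1 - 2 * l2 + p1) * nc \<le> 0"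
    and c2: "p1 * (N - 1 - N * r2) + 2 * \<alpha>\<^sup>2 * q \<le> 0"
    and c3: "p4 * (N - 1 - N * r2) + r * q \<le> 0"
    and rho: "N - 1 - N * r2 \<le> 0"
    and pos: "na \<ge> 0" "nb \<ge> 0" "Au \<ge> 0" "Bu \<ge> 0" "l1 \<ge> 0" "l2 \<ge> 0" "N > 0" "p1 > 0" "p4 > 0"
  shows "p4 * (N - 1) * A + p4 * N * nu + p1 * (N - 1) * B + p1 * C + SW
         \<le> N * r2 * (p4 * A + p1 * B + nu)"
proof -
  define \<rho>' where "\<rho>' = N - 1 - N * r2"
  define Mx where "Mx = (p4 - r2 + 2 * L * \<gamma> * l2 - 2 * L * m * l1 + 1) * nu
            + 2 * ((L + m) * l1 + (L - \<gamma>) * l2 - \<alpha>) * iuc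
            + (\<alpha>\<^sup>2 - 2 * l1 - 2 * l2 + p1) * nc"
  define Sx where "Sx = - 2 * m * L * nu + 2 * (L + m) * iuc - 2 * nc"
  define Tx where "Tx = (L - \<gamma>) * N * iuc - C + N * \<gamma> * L * nu"
  have id: "p4 * (N - 1) * A + p4 * N * nu + p1 * (N - 1) * B + p1 * C + SW
         - N * r2 * (p4 * A + p1 * B + nu)
       = N * Mx + p4 * \<rho>' * (N * na) + p1 * \<rho>' * (N * nb) + p4 * \<rho>' * Au + p1 * \<rho>' * Bu
         + ((p1 - 2 * l2) * Cd + Y) - l1 * N * Sx - 2 * l2 * Tx"
    unfolding \<rho>'_def Mx_def Sx_def Tx_def hA hB hSW
    by (simp add: hC algebra_simps power2_eq_square)
  have 1: "N * Mx \<le> 0" using M pos unfolding Mx_def by (simp add: mult_nonneg_nonpos)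
  have 2: "p4 * \<rho>' * (N * na) \<le> 0" using rho pos unfolding \<rho>'_def
    by (intro mult_nonpos_nonneg mult_nonneg_nonpos) auto
  have 3: "p1 * \<rho>' * (N * nb) \<le> 0" using rho pos unfolding \<rho>'_def
    by (intro mult_nonpos_nonneg mult_nonneg_nonpos) auto
  have 4: "l1 * N * Sx \<ge> 0" using S pos unfolding Sx_def by simp
  have 5: "l2 * Tx \<ge> 0" using T pos unfolding Tx_def by simp
  have 6: "q * Z \<le> q * (r * Au + 2 * \<alpha>\<^sup>2 * Bu)" using hZ q by (rule mult_left_mono)
  have 7: "(p4 * \<rho>' + r * q) * Au \<le> 0" using c3 pos unfolding \<rho>'_def by (simp add: mult_nonpos_nonneg)
  have 8: "(p1 * \<rho>' + 2 * \<alpha>\<^sup>2 * q) * Bu \<le> 0" using c2 pos unfolding \<rho>'_def by (simp add: mult_nonpos_nonneg)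
  have 9: "p4 * \<rho>' * Au + p1 * \<rho>' * Bu + ((p1 - 2 * l2) * Cd + Y) \<le> 0"
  proof -
    have "p4 * \<rho>' * Au + p1 * \<rho>' * Bu + ((p1 - 2 * l2) * Cd + Y) \<le> p4 * \<rho>' * Au + p1 * \<rho>' * Bu + q * (r * Au + 2 * \<alpha>\<^sup>2 * Bu)"
      using hY 6 by linarith
    also have "\<dots> = (p4 * \<rho>' + r * q) * Au + (p1 * \<rho>' + 2 * \<alpha>\<^sup>2 * q) * Bu" by (simp add: algebra_simps)
    also have "\<dots> \<le> 0" using 7 8 by linarith
    finally show ?thesis .
  qed
  have "p4 * (N - 1) * A + p4 * N * nu + p1 * (N - 1) * B + p1 * C + SW
         - N * r2 * (p4 * A + p1 * B + nu) \<le> 0"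
    unfolding id using 1 2 3 4 5 9 by linarith
  then show ?thesis by simp
qed


lemma norm_add_sq: "(norm (x + y))\<^sup>2 = (norm x)\<^sup>2 + 2 * inner x y + (norm y)\<^sup>2" for x y :: "'a::real_inner"
  by (simp add: power2_norm_eq_inner inner_add_left inner_add_right inner_commute[of y x])

lemma norm_diff_sq: "(norm (x - y))\<^sup>2 = (norm x)\<^sup>2 - 2 * inner x y + (norm y)\<^sup>2" for x y :: "'a::real_inner"
  by (simp add: power2_norm_eq_inner inner_diff_left inner_diff_right inner_commute[of y x])

lemma sum_sq_shift:
  fixes e :: "nat \<Rightarrow> 'a::real_inner"
  assumes "(\<Sum>j<n. e j) = 0"
  shows "(\<Sum>j<n. (norm (p + e j))\<^sup>2) = real n * (norm p)\<^sup>2 + (\<Sum>j<n. (norm (e j))\<^sup>2)"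
proof -
  have "(\<Sum>j<n. (norm (p + e j))\<^sup>2) = (\<Sum>j<n. (norm p)\<^sup>2 + 2 * inner p (e j) + (norm (e j))\<^sup>2)"
    by (simp add: norm_add_sq)
  also have "\<dots> = real n * (norm p)\<^sup>2 + 2 * inner p (\<Sum>j<n. e j) + (\<Sum>j<n. (norm (e j))\<^sup>2)"
    by (simp add: sum.distrib inner_sum_right sum_distrib_left)
  finally show ?thesis using assms by simp
qed

lemma var_decomp:
  fixes x :: "nat \<Rightarrow> 'a::real_inner"
  assumes n: "n \<ge> 1"
  shows "(\<Sum>j<n. (norm (x j))\<^sup>2) = real n * (norm ((1 / real n) *\<^sub>R (\<Sum>j<n. x j)))\<^sup>2
          + (\<Sum>j<n. (norm (x j - (1 / real n) *\<^sub>R (\<Sum>j<n. x j)))\<^sup>2)"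
proof -
  define xb where "xb = (1 / real n) *\<^sub>R (\<Sum>j<n. x j)"
  have "(\<Sum>j<n. x j - xb) = (\<Sum>j<n. x j) - real n *\<^sub>R xb"
    by (simp add: sum_subtractf sum_constant_scaleR)
  also have "\<dots> = 0" using n unfolding xb_def by simp
  finally have "(\<Sum>j<n. (norm (xb + (x j - xb)))\<^sup>2) = real n * (norm xb)\<^sup>2 + (\<Sum>j<n. (norm (x j - xb))\<^sup>2)"
    by (rule sum_sq_shift)
  then show ?thesis unfolding xb_def by simp
qed

lemma fluct:
  fixes z d :: "'a::real_inner"
  assumes D: "D < 0" "D = \<alpha>\<^sup>2 + P"
  shows "(norm (z - \<alpha> *\<^sub>R d))\<^sup>2 + P * (norm d)\<^sup>2 \<le> (1 - \<alpha>\<^sup>2 / D) * (norm z)\<^sup>2"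
proof -
  have e1: "(norm (z - \<alpha> *\<^sub>R d))\<^sup>2 = (norm z)\<^sup>2 - 2 * \<alpha> * inner z d + \<alpha>\<^sup>2 * (norm d)\<^sup>2"
    by (simp add: norm_diff_sq power_mult_distrib)
  have e2: "(norm (\<alpha> *\<^sub>R z - D *\<^sub>R d))\<^sup>2 = \<alpha>\<^sup>2 * (norm z)\<^sup>2 - 2 * \<alpha> * D * inner z d + D\<^sup>2 * (norm d)\<^sup>2"
    by (simp add: norm_diff_sq power_mult_distrib)
  have "(1 - \<alpha>\<^sup>2 / D) * (norm z)\<^sup>2 - ((norm (z - \<alpha> *\<^sub>R d))\<^sup>2 + P * (norm d)\<^sup>2)
        = - (1 / D) * (norm (\<alpha> *\<^sub>R z - D *\<^sub>R d))\<^sup>2"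
    unfolding e1 e2 using D by (simp add: field_simps power2_eq_square)
  moreover have "- (1 / D) * (norm (\<alpha> *\<^sub>R z - D *\<^sub>R d))\<^sup>2 \<ge> 0"
    using D by (intro mult_nonneg_nonneg) auto
  ultimately show ?thesis by linarith
qed

lemma two_sq: "(norm (x + y))\<^sup>2 \<le> 2 * (norm x)\<^sup>2 + 2 * (norm y)\<^sup>2" for x y :: "'a::real_inner"
proof -
  have "0 \<le> (norm (x - y))\<^sup>2" by simp
  then show ?thesis by (simp add: norm_add_sq norm_diff_sq)
qed


lemma core:
  fixes a b c :: "nat \<Rightarrow> 'a::real_inner" and u :: 'a
    and L m \<gamma> \<alpha> \<rho> p1 p4 lam1 lam2 :: real
  assumes n: "n \<ge> 1"
    and hu: "u = (1 / real n) *\<^sub>R (\<Sum>j<n. a j) - \<alpha> *\<^sub>R (\<Sum>j<n. b j)"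
    and S: "- 2 * m * L * (norm u)\<^sup>2 + 2 * (L + m) * inner u ((1 / real n) *\<^sub>R (\<Sum>j<n. c j))
             - 2 * (norm ((1 / real n) *\<^sub>R (\<Sum>j<n. c j)))\<^sup>2 \<ge> 0"
    and T: "\<And>j. j < n \<Longrightarrow> (L - \<gamma>) * inner u (c j) - (norm (c j))\<^sup>2 + \<gamma> * L * (norm u)\<^sup>2 \<ge> 0"
    and rho: "1 - 1 / real n \<le> \<rho>\<^sup>2"
    and p_pos: "p1 > 0" "p4 > 0"
    and lam: "lam1 \<ge> 0" "lam2 \<ge> 0"
    and c1: "\<alpha>\<^sup>2 - 2 * lam2 + p1 < 0"
    and c2: "real n * (1 - \<rho>\<^sup>2) * p1 - p1 + 2 * \<alpha>\<^sup>2
               - 2 * \<alpha> ^ 4 / (\<alpha>\<^sup>2 - 2 * lam2 + p1) \<le> 0"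
    and c3: "real n * (1 - \<rho>\<^sup>2) * p4 - p4 + 2 / (real n)\<^sup>2
               - 2 * \<alpha>\<^sup>2 / ((real n)\<^sup>2 * (\<alpha>\<^sup>2 - 2 * lam2 + p1)) \<le> 0"
    and c4: "p4 - \<rho>\<^sup>2 + 2 * L * \<gamma> * lam2 - 2 * L * m * lam1 + 1
               - ((L + m) * lam1 + (L - \<gamma>) * lam2 - \<alpha>)\<^sup>2
                 / (\<alpha>\<^sup>2 - 2 * lam1 - 2 * lam2 + p1) \<le> 0"
  shows "(\<Sum>j<n. p4 * ((\<Sum>i<n. (norm (a i))\<^sup>2) - (norm (a j))\<^sup>2 + (norm u)\<^sup>2)
              + p1 * ((\<Sum>i<n. (norm (b i))\<^sup>2) - (norm (b j))\<^sup>2 + (norm (c j))\<^sup>2)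
              + (norm (u + (1 / real n) *\<^sub>R (u - a j) - \<alpha> *\<^sub>R (c j - b j)))\<^sup>2)
         \<le> real n * \<rho>\<^sup>2 * (p4 * (\<Sum>i<n. (norm (a i))\<^sup>2) + p1 * (\<Sum>i<n. (norm (b i))\<^sup>2) + (norm u)\<^sup>2)"
proof -
  define N where "N = real n"
  have N: "N > 0" "N \<ge> 1" using n unfolding N_def by auto
  define ab where "ab = (1 / N) *\<^sub>R (\<Sum>j<n. a j)"
  define bb where "bb = (1 / N) *\<^sub>R (\<Sum>j<n. b j)"
  define cb where "cb = (1 / N) *\<^sub>R (\<Sum>j<n. c j)"
  define z where "z j = (1 / N) *\<^sub>R (u - a j) + \<alpha> *\<^sub>R b j" for j
  define d where "d j = c j - cb" for j
  define A where "A = (\<Sum>i<n. (norm (a i))\<^sup>2)"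
  define B where "B = (\<Sum>i<n. (norm (b i))\<^sup>2)"
  define C where "C = (\<Sum>i<n. (norm (c i))\<^sup>2)"
  define Au where "Au = (\<Sum>i<n. (norm (a i - ab))\<^sup>2)"
  define Bu where "Bu = (\<Sum>i<n. (norm (b i - bb))\<^sup>2)"
  define Cd where "Cd = (\<Sum>i<n. (norm (d i))\<^sup>2)"
  define Y where "Y = (\<Sum>j<n. (norm (z j - \<alpha> *\<^sub>R d j))\<^sup>2)"
  define Z where "Z = (\<Sum>j<n. (norm (z j))\<^sup>2)"
  define SW where "SW = (\<Sum>j<n. (norm (u + (1 / real n) *\<^sub>R (u - a j) - \<alpha> *\<^sub>R (c j - b j)))\<^sup>2)"
  define Dl where "Dl = \<alpha>\<^sup>2 - 2 * lam2 + p1"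
  define q where "q = 1 - \<alpha>\<^sup>2 / Dl"
  define r where "r = 2 / N\<^sup>2"
  have Dl: "Dl < 0" using c1 unfolding Dl_def .
  have sa: "(\<Sum>j<n. a j) = N *\<^sub>R ab" using N unfolding ab_def by simp
  have sb: "(\<Sum>j<n. b j) = N *\<^sub>R bb" using N unfolding bb_def by simp
  have sc: "(\<Sum>j<n. c j) = N *\<^sub>R cb" using N unfolding cb_def by simp
  have hu': "u = ab - (N * \<alpha>) *\<^sub>R bb" using hu sb unfolding ab_def N_def by simp
  have hA: "A = N * (norm ab)\<^sup>2 + Au" unfolding A_def Au_def ab_def N_def by (rule var_decomp[OF n])
  have hB: "B = N * (norm bb)\<^sup>2 + Bu" unfolding B_def Bu_def bb_def N_def by (rule var_decomp[OF n])
  have hC: "C = N * (norm cb)\<^sup>2 + Cd" unfolding C_def Cd_def cb_def d_def N_def by (rule var_decomp[OF n])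
  have sz: "(\<Sum>j<n. z j) = 0"
  proof -
    have "(\<Sum>j<n. z j) = (1 / N) *\<^sub>R (N *\<^sub>R u - (\<Sum>j<n. a j)) + \<alpha> *\<^sub>R (\<Sum>j<n. b j)"
      unfolding z_def by (simp add: sum.distrib scaleR_sum_right[symmetric] sum_subtractf N_def sum_constant_scaleR)
    also have "\<dots> = u - ab + (N * \<alpha>) *\<^sub>R bb" using N sa sb by (simp add: algebra_simps)
    also have "\<dots> = 0" using hu' by simp
    finally show ?thesis .
  qed
  have sd: "(\<Sum>j<n. d j) = 0" unfolding d_def using sc by (simp add: sum_subtractf N_def sum_constant_scaleR)
  have hw: "u + (1 / real n) *\<^sub>R (u - a j) - \<alpha> *\<^sub>R (c j - b j) = (u - \<alpha> *\<^sub>R cb) + (z j - \<alpha> *\<^sub>R d j)" for j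
    unfolding z_def d_def N_def by (simp add: algebra_simps)
  have se: "(\<Sum>j<n. z j - \<alpha> *\<^sub>R d j) = 0" using sz sd by (simp add: sum_subtractf scaleR_sum_right[symmetric])
  have hSW: "SW = N * (norm u)\<^sup>2 - 2 * \<alpha> * N * inner u cb + N * \<alpha>\<^sup>2 * (norm cb)\<^sup>2 + Y"
  proof -
    have "SW = N * (norm (u - \<alpha> *\<^sub>R cb))\<^sup>2 + Y"
      unfolding SW_def Y_def hw N_def by (rule sum_sq_shift[OF se])
    then show ?thesis by (simp add: norm_diff_sq power_mult_distrib algebra_simps)
  qed
  have hY: "Y + (p1 - 2 * lam2) * Cd \<le> q * Z"
  proof -
    have "(norm (z j - \<alpha> *\<^sub>R d j))\<^sup>2 + (p1 - 2 * lam2) * (norm (d j))\<^sup>2 \<le> q * (norm (z j))\<^sup>2" for j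
      unfolding q_def by (rule fluct) (use Dl in \<open>auto simp: Dl_def\<close>)
    then have "(\<Sum>j<n. (norm (z j - \<alpha> *\<^sub>R d j))\<^sup>2 + (p1 - 2 * lam2) * (norm (d j))\<^sup>2) \<le> (\<Sum>j<n. q * (norm (z j))\<^sup>2)"
      by (rule sum_mono)
    then show ?thesis unfolding Y_def Cd_def Z_def by (simp add: sum.distrib sum_distrib_left)
  qed
  have hZ: "Z \<le> r * Au + 2 * \<alpha>\<^sup>2 * Bu"
  proof -
    have "(norm (z j))\<^sup>2 \<le> r * (norm (a j - ab))\<^sup>2 + 2 * \<alpha>\<^sup>2 * (norm (b j - bb))\<^sup>2" for j
    proof -
      have k: "(1 / N) *\<^sub>R ((N * \<alpha>) *\<^sub>R bb) = \<alpha> *\<^sub>R bb" using N by simp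
      have "z j = (1 / N) *\<^sub>R ab - (1 / N) *\<^sub>R ((N * \<alpha>) *\<^sub>R bb) - (1 / N) *\<^sub>R a j + \<alpha> *\<^sub>R b j"
        unfolding z_def hu' by (simp add: scaleR_diff_right)
      also have "\<dots> = (- (1 / N)) *\<^sub>R (a j - ab) + \<alpha> *\<^sub>R (b j - bb)"
        unfolding k by (simp add: algebra_simps)
      finally have "z j = (- (1 / N)) *\<^sub>R (a j - ab) + \<alpha> *\<^sub>R (b j - bb)" .
      then have "(norm (z j))\<^sup>2 \<le> 2 * (norm ((- (1 / N)) *\<^sub>R (a j - ab)))\<^sup>2 + 2 * (norm (\<alpha> *\<^sub>R (b j - bb)))\<^sup>2"
        using two_sq by metis
      also have "\<dots> = r * (norm (a j - ab))\<^sup>2 + 2 * \<alpha>\<^sup>2 * (norm (b j - bb))\<^sup>2"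
        unfolding r_def by (simp add: power_mult_distrib power_divide)
      finally show ?thesis .
    qed
    then have "(\<Sum>j<n. (norm (z j))\<^sup>2) \<le> (\<Sum>j<n. r * (norm (a j - ab))\<^sup>2 + 2 * \<alpha>\<^sup>2 * (norm (b j - bb))\<^sup>2)"
      by (rule sum_mono)
    then show ?thesis unfolding Z_def Au_def Bu_def by (simp add: sum.distrib sum_distrib_left)
  qed
  have q0: "q \<ge> 0"
  proof -
    have "\<alpha>\<^sup>2 / Dl \<le> 0" using Dl by (simp add: divide_nonneg_neg)
    then show ?thesis unfolding q_def by simp
  qed
  have S': "- 2 * m * L * (norm u)\<^sup>2 + 2 * (L + m) * inner u cb - 2 * (norm cb)\<^sup>2 \<ge> 0"
    using S unfolding cb_def N_def .
  have T': "(L - \<gamma>) * N * inner u cb - C + N * \<gamma> * L * (norm u)\<^sup>2 \<ge> 0"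
  proof -
    have "(\<Sum>j<n. (L - \<gamma>) * inner u (c j) - (norm (c j))\<^sup>2 + \<gamma> * L * (norm u)\<^sup>2) \<ge> 0"
      using T by (intro sum_nonneg) auto
    moreover have "(\<Sum>j<n. (L - \<gamma>) * inner u (c j) - (norm (c j))\<^sup>2 + \<gamma> * L * (norm u)\<^sup>2)
        = (L - \<gamma>) * inner u (\<Sum>j<n. c j) - C + N * \<gamma> * L * (norm u)\<^sup>2"
      unfolding C_def N_def by (simp add: sum.distrib sum_subtractf inner_sum_right sum_distrib_left)
    ultimately show ?thesis using sc by (simp add: algebra_simps)
  qed
  have M: "(p4 - \<rho>\<^sup>2 + 2 * L * \<gamma> * lam2 - 2 * L * m * lam1 + 1) * (norm u)\<^sup>2
            + 2 * ((L + m) * lam1 + (L - \<gamma>) * lam2 - \<alpha>) * inner u cb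
            + (\<alpha>\<^sup>2 - 2 * lam1 - 2 * lam2 + p1) * (norm cb)\<^sup>2 \<le> 0"
  proof -
    define K where "K = p4 - \<rho>\<^sup>2 + 2 * L * \<gamma> * lam2 - 2 * L * m * lam1 + 1"
    define E where "E = (L + m) * lam1 + (L - \<gamma>) * lam2 - \<alpha>"
    define D' where "D' = \<alpha>\<^sup>2 - 2 * lam1 - 2 * lam2 + p1"
    have D': "D' < 0" using c1 lam unfolding D'_def by linarith
    have "K - E\<^sup>2 / D' \<le> 0" using c4 unfolding K_def E_def D'_def .
    then have KE: "K * D' \<ge> E\<^sup>2" using D' by (simp add: field_simps)
    have sq: "(norm (E *\<^sub>R u + D' *\<^sub>R cb))\<^sup>2 = E\<^sup>2 * (norm u)\<^sup>2 + 2 * E * D' * inner u cb + D'\<^sup>2 * (norm cb)\<^sup>2"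
      by (simp add: norm_add_sq power_mult_distrib)
    have "D' * (K * (norm u)\<^sup>2 + 2 * E * inner u cb + D' * (norm cb)\<^sup>2)
          = (K * D') * (norm u)\<^sup>2 + 2 * E * D' * inner u cb + D'\<^sup>2 * (norm cb)\<^sup>2"
      by (simp add: algebra_simps power2_eq_square)
    also have "\<dots> \<ge> E\<^sup>2 * (norm u)\<^sup>2 + 2 * E * D' * inner u cb + D'\<^sup>2 * (norm cb)\<^sup>2"
      using KE by (simp add: mult_right_mono)
    finally have "D' * (K * (norm u)\<^sup>2 + 2 * E * inner u cb + D' * (norm cb)\<^sup>2) \<ge> 0"
      using sq by (metis (no_types, lifting) order_trans zero_le_power2)
    then have "K * (norm u)\<^sup>2 + 2 * E * inner u cb + D' * (norm cb)\<^sup>2 \<le> 0"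
      using D' by (simp add: zero_le_mult_iff)
    then show ?thesis unfolding K_def E_def D'_def by simp
  qed
  have c2': "p1 * (N - 1 - N * \<rho>\<^sup>2) + 2 * \<alpha>\<^sup>2 * q \<le> 0"
  proof -
    have "p1 * (N - 1 - N * \<rho>\<^sup>2) + 2 * \<alpha>\<^sup>2 * q = real n * (1 - \<rho>\<^sup>2) * p1 - p1 + 2 * \<alpha>\<^sup>2
               - 2 * \<alpha> ^ 4 / (\<alpha>\<^sup>2 - 2 * lam2 + p1)"
      unfolding q_def Dl_def N_def by (simp add: algebra_simps power2_eq_square power4_eq_xxxx)
    then show ?thesis using c2 by simp
  qed
  have c3': "p4 * (N - 1 - N * \<rho>\<^sup>2) + r * q \<le> 0"
  proof -
    have "p4 * (N - 1 - N * \<rho>\<^sup>2) + r * q = real n * (1 - \<rho>\<^sup>2) * p4 - p4 + 2 / (real n)\<^sup>2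
               - 2 * \<alpha>\<^sup>2 / ((real n)\<^sup>2 * (\<alpha>\<^sup>2 - 2 * lam2 + p1))"
      unfolding q_def Dl_def N_def r_def by (simp add: algebra_simps)
    then show ?thesis using c3 by simp
  qed
  have rho': "N - 1 - N * \<rho>\<^sup>2 \<le> 0"
  proof -
    have "N * (1 - 1 / N) \<le> N * \<rho>\<^sup>2" using rho N unfolding N_def by (intro mult_left_mono) auto
    then show ?thesis using N by (simp add: algebra_simps)
  qed
  have lhs: "(\<Sum>j<n. p4 * (A - (norm (a j))\<^sup>2 + (norm u)\<^sup>2)
              + p1 * (B - (norm (b j))\<^sup>2 + (norm (c j))\<^sup>2)
              + (norm (u + (1 / real n) *\<^sub>R (u - a j) - \<alpha> *\<^sub>R (c j - b j)))\<^sup>2)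
        = p4 * (N - 1) * A + p4 * N * (norm u)\<^sup>2 + p1 * (N - 1) * B + p1 * C + SW"
    unfolding SW_def A_def B_def C_def N_def
    by (simp add: sum.distrib sum_subtractf sum_distrib_left[symmetric] algebra_simps)
  have "p4 * (N - 1) * A + p4 * N * (norm u)\<^sup>2 + p1 * (N - 1) * B + p1 * C + SW
         \<le> N * \<rho>\<^sup>2 * (p4 * A + p1 * B + (norm u)\<^sup>2)"
    by (rule final_scalar[OF hA hB hC hSW hY hZ q0 S' T' M c2' c3' rho']) (use N p_pos lam in \<open>auto simp: Au_def Bu_def intro: sum_nonneg\<close>)
  then show ?thesis using lhs unfolding A_def B_def C_def N_def by simp
qed


lemma sum_upd:
  fixes F :: "nat \<Rightarrow> 'b \<Rightarrow> 'c::ab_group_add"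
  assumes "j < n"
  shows "(\<Sum>i<n. F i ((g(j := w)) i)) = (\<Sum>i<n. F i (g i)) - F j (g j) + F j w"
proof -
  have j: "j \<in> {..<n}" using assms by simp
  have "(\<Sum>i<n. F i ((g(j := w)) i)) = F j w + (\<Sum>i\<in>{..<n} - {j}. F i ((g(j := w)) i))"
    using sum.remove[OF finite_lessThan j, of "\<lambda>i. F i ((g(j := w)) i)"] by simp
  also have "(\<Sum>i\<in>{..<n} - {j}. F i ((g(j := w)) i)) = (\<Sum>i\<in>{..<n} - {j}. F i (g i))"
    by (rule sum.cong) auto
  also have "\<dots> = (\<Sum>i<n. F i (g i)) - F j (g j)"
    using sum.remove[OF finite_lessThan j, of "\<lambda>i. F i (g i)"] by simp
  finally show ?thesis by simp
qed

lemma lists_Suc: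
  fixes F :: "nat list \<Rightarrow> 'a::comm_monoid_add" and n k :: nat
  shows
  "(\<Sum>js\<in>{js. length js = Suc k \<and> set js \<subseteq> {..<n}}. F js)
   = (\<Sum>js\<in>{js. length js = k \<and> set js \<subseteq> {..<n}}. \<Sum>j<n. F (js @ [j]))"
proof -
  let ?Lk = "{js. length js = k \<and> set js \<subseteq> {..<n}}"
  have eq: "{js. length js = Suc k \<and> set js \<subseteq> {..<n}} = (\<lambda>(js, j). js @ [j]) ` (?Lk \<times> {..<n})"
  proof
    show "{js. length js = Suc k \<and> set js \<subseteq> {..<n}} \<subseteq> (\<lambda>(js, j). js @ [j]) ` (?Lk \<times> {..<n})"
    proof
      fix js assume js: "js \<in> {js. length js = Suc k \<and> set js \<subseteq> {..<n}}"
      then have ne: "js \<noteq> []" by auto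
      have "js = butlast js @ [last js]" using ne by simp
      moreover have "butlast js \<in> ?Lk" using js by (auto dest: in_set_butlastD)
      moreover have "last js \<in> {..<n}" using js ne last_in_set by blast
      ultimately show "js \<in> (\<lambda>(js, j). js @ [j]) ` (?Lk \<times> {..<n})" by force
    qed
  qed auto
  have inj: "inj_on (\<lambda>(js, j). js @ [j]) (?Lk \<times> {..<n})"
    by (auto simp: inj_on_def)
  have fin: "finite ?Lk"
    using finite_lists_length_eq[OF finite_lessThan[of n], of k] by (simp add: conj_commute)
  show ?thesis
    unfolding eq sum.reindex[OF inj] using fin by (simp add: sum.cartesian_product split_def)
qed


theorem corollary4:
  fixes n :: nat and f :: "nat \<Rightarrow> 'a::euclidean_space \<Rightarrow> real" and df :: "nat \<Rightarrow> 'a \<Rightarrow> 'a"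
    and L m \<gamma> \<alpha> \<rho> p1 p4 lam1 lam2 :: real and xs :: 'a
    and x0 y0 :: "nat \<Rightarrow> 'a" and k :: nat
  assumes n: "n \<ge> 1"
    and smooth: "\<And>i. i < n \<Longrightarrow> smooth_C1 L (f i) (df i)"
    and m_pos: "m > 0"
    and gS: "in_S m L (\<lambda>x. (1 / real n) * (\<Sum>i<n. f i x))"
    and xs: "(1 / real n) *\<^sub>R (\<Sum>i<n. df i xs) = 0"
    and gamma: "(\<gamma> = - m \<and> (\<forall>i<n. strongly_convex m (f i)))
              \<or> (\<gamma> = 0 \<and> (\<forall>i<n. convex_on UNIV (f i)))
              \<or> \<gamma> = L"
    and alpha: "\<alpha> > 0"
    and rho: "1 - 1 / real n \<le> \<rho>\<^sup>2" "\<rho>\<^sup>2 \<le> 1"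
    and p_pos: "p1 > 0" "p4 > 0"
    and lam: "lam1 \<ge> 0" "lam2 \<ge> 0"
    and c1: "\<alpha>\<^sup>2 - 2 * lam2 + p1 < 0"
    and c2: "real n * (1 - \<rho>\<^sup>2) * p1 - p1 + 2 * \<alpha>\<^sup>2
               - 2 * \<alpha> ^ 4 / (\<alpha>\<^sup>2 - 2 * lam2 + p1) \<le> 0"
    and c3: "real n * (1 - \<rho>\<^sup>2) * p4 - p4 + 2 / (real n)\<^sup>2
               - 2 * \<alpha>\<^sup>2 / ((real n)\<^sup>2 * (\<alpha>\<^sup>2 - 2 * lam2 + p1)) \<le> 0"
    and c4: "p4 - \<rho>\<^sup>2 + 2 * L * \<gamma> * lam2 - 2 * L * m * lam1 + 1
               - ((L + m) * lam1 + (L - \<gamma>) * lam2 - \<alpha>)\<^sup>2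
                 / (\<alpha>\<^sup>2 - 2 * lam1 - 2 * lam2 + p1) \<le> 0"
  shows "expect_uniform n k (\<lambda>js. lyap n \<alpha> p1 p4 df xs (finito n \<alpha> df (x0, y0) js))
           \<le> (\<rho>\<^sup>2) ^ k * lyap n \<alpha> p1 p4 df xs (x0, y0)"
proof -
  define N where "N = real n"
  have N: "N > 0" "N \<ge> 1" using n unfolding N_def by auto
  have gdi: "\<And>i x. i < n \<Longrightarrow> GDERIV (f i) x :> df i x"
    and lipi: "\<And>i x y. i < n \<Longrightarrow> norm (df i x - df i y) \<le> L * norm (x - y)"
    using smooth unfolding smooth_C1_def by blast+
  define G where "G x = (1 / real n) *\<^sub>R (\<Sum>i<n. df i x)" for x
  obtain dg where gd: "\<And>x. GDERIV (\<lambda>x. (1 / real n) * (\<Sum>i<n. f i x)) x :> dg x"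
    and ex1: "\<exists>!xs. dg xs = 0 \<and>
        (\<forall>x. - 2 * m * L * (norm (x - xs))\<^sup>2 + 2 * (L + m) * inner (x - xs) (dg x)
               - 2 * (norm (dg x))\<^sup>2 \<ge> 0)"
    using gS unfolding in_S_def by blast
  have dgG: "dg x = G x" for x
  proof -
    have 1: "((\<lambda>x. (1 / real n) * (\<Sum>i<n. f i x)) has_derivative (\<lambda>h. inner h (dg x))) (at x)"
      using gd[of x] by (simp add: gderiv_def)
    have "((\<lambda>x. (1 / real n) * (\<Sum>i<n. f i x)) has_derivative (\<lambda>h. (1 / real n) * (\<Sum>i<n. inner h (df i x)))) (at x)"
      using gdi[of _ x] unfolding gderiv_def
      by (intro has_derivative_mult_right has_derivative_sum) auto
    moreover have "(\<lambda>h. (1 / real n) * (\<Sum>i<n. inner h (df i x))) = (\<lambda>h. inner h (G x))"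
      unfolding G_def by (simp add: inner_sum_right)
    ultimately have 2: "((\<lambda>x. (1 / real n) * (\<Sum>i<n. f i x)) has_derivative (\<lambda>h. inner h (G x))) (at x)"
      by simp
    have "(\<lambda>h. inner h (dg x)) = (\<lambda>h. inner h (G x))" by (rule has_derivative_unique[OF 1 2])
    then have "inner (dg x - G x) (dg x) = inner (dg x - G x) (G x)" by metis
    then have "inner (dg x - G x) (dg x - G x) = 0" by (simp add: inner_diff_right)
    then show ?thesis by simp
  qed
  have sdxs: "(\<Sum>i<n. df i xs) = 0" using xs N unfolding N_def by simp
  have Gxs: "G xs = 0" unfolding G_def sdxs by simp
  obtain xs0 where xs0: "dg xs0 = 0"
     "\<forall>x. - 2 * m * L * (norm (x - xs0))\<^sup>2 + 2 * (L + m) * inner (x - xs0) (dg x)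
               - 2 * (norm (dg x))\<^sup>2 \<ge> 0"
    using ex1 by blast
  have Lpos: "L > 0"
  proof (rule ccontr)
    assume "\<not> L > 0"
    then have L0: "L \<le> 0" by simp
    have const: "df i x = df i xs" if "i < n" for i x
    proof -
      have "norm (df i x - df i xs) \<le> L * norm (x - xs)" using lipi that by blast
      also have "\<dots> \<le> 0" using L0 by (simp add: mult_nonpos_nonneg)
      finally show ?thesis by simp
    qed
    have G0: "dg x = 0" for x
    proof -
      have "(\<Sum>i<n. df i x) = (\<Sum>i<n. df i xs)" by (intro sum.cong refl) (metis const lessThan_iff)
      then have "G x = G xs" unfolding G_def by simp
      then show ?thesis using Gxs dgG by simp
    qed
    obtain e :: 'a where e: "e \<in> Basis" using nonempty_Basis by blast
    then have e0: "e \<noteq> 0" by (rule nonzero_Basis)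
    have P: "dg p = 0 \<and> (\<forall>x. - 2 * m * L * (norm (x - p))\<^sup>2 + 2 * (L + m) * inner (x - p) (dg x)
               - 2 * (norm (dg x))\<^sup>2 \<ge> 0)" for p
    proof -
      have "m * L \<le> 0" using m_pos L0 by (simp add: mult_nonneg_nonpos)
      then have "m * L * (norm (x - p))\<^sup>2 \<le> 0" for x
        by (rule mult_nonpos_nonneg) simp
      then have "- 2 * m * L * (norm (x - p))\<^sup>2 \<ge> 0" for x
        using \<open>m * L * (norm (x - p))\<^sup>2 \<le> 0\<close> by linarith
      then show ?thesis using G0 by simp
    qed
    have "xs0 + e = xs0" using ex1 P[of xs0] P[of "xs0 + e"] by blast
    then show False using e0 by simp
  qed
  have "- 2 * m * L * (norm (xs - xs0))\<^sup>2 \<ge> 0" using xs0(2)[rule_format, of xs] dgG Gxs by simp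
  then have mLN: "(m * L) * (norm (xs - xs0))\<^sup>2 \<le> 0" by linarith
  have "m * L > 0" using m_pos Lpos by simp
  then have "(norm (xs - xs0))\<^sup>2 \<le> 0" using mLN mult_le_0_iff[of "m * L" "(norm (xs - xs0))\<^sup>2"] by auto
  then have xs0xs: "xs0 = xs" by simp
  have Sineq: "- 2 * m * L * (norm (x - xs))\<^sup>2 + 2 * (L + m) * inner (x - xs) (G x) - 2 * (norm (G x))\<^sup>2 \<ge> 0" for x
    using xs0(2) xs0xs dgG by metis
  have Tineq_i: "(L - \<gamma>) * inner (v - xs) (df i v - df i xs) - (norm (df i v - df i xs))\<^sup>2
                 + \<gamma> * L * (norm (v - xs))\<^sup>2 \<ge> 0" if i: "i < n" for i v
  proof -
    have gdf: "\<And>x. GDERIV (f i) x :> df i x" using gdi i by blast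
    have lf: "\<And>x y. norm (df i x - df i y) \<le> L * norm (x - y)" using lipi i by blast
    consider (sc) "\<gamma> = - m" "strongly_convex m (f i)" | (cv) "\<gamma> = 0" "convex_on UNIV (f i)" | (sm) "\<gamma> = L"
      using gamma i by blast
    then show ?thesis
    proof cases
      case sc
      have FO: "f i w + inner (df i w) (z - w) + m / 2 * (norm (z - w))\<^sup>2 \<le> f i z" for w z
      proof (rule first_order[OF gdf])
        fix t :: real assume t: "0 < t" "t < 1"
        have "w + t *\<^sub>R (z - w) = t *\<^sub>R z + (1 - t) *\<^sub>R w" by (simp add: algebra_simps)
        then show "f i (w + t *\<^sub>R (z - w)) \<le> t * f i z + (1 - t) * f i w - m / 2 * t * (1 - t) * (norm (z - w))\<^sup>2"
          using sc(2) t unfolding strongly_convex_def by auto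
      qed
      have "(L + m) * inner (v - xs) (df i v - df i xs) - (norm (df i v - df i xs))\<^sup>2 - m * L * (norm (v - xs))\<^sup>2 \<ge> 0"
        by (rule Tineq[OF gdf lf FO]) (use m_pos in simp)
      then show ?thesis using sc by simp
    next
      case cv
      have FO: "f i w + inner (df i w) (z - w) + 0 / 2 * (norm (z - w))\<^sup>2 \<le> f i z" for w z
      proof (rule first_order[OF gdf])
        fix t :: real assume t: "0 < t" "t < 1"
        have "w + t *\<^sub>R (z - w) = (1 - t) *\<^sub>R w + t *\<^sub>R z" by (simp add: algebra_simps)
        then show "f i (w + t *\<^sub>R (z - w)) \<le> t * f i z + (1 - t) * f i w - 0 / 2 * t * (1 - t) * (norm (z - w))\<^sup>2"
          using convex_onD[OF cv(2), of t w z] t by simp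
      qed
      have "(L + 0) * inner (v - xs) (df i v - df i xs) - (norm (df i v - df i xs))\<^sup>2 - 0 * L * (norm (v - xs))\<^sup>2 \<ge> 0"
        by (rule Tineq[OF gdf lf FO]) simp
      then show ?thesis using cv by simp
    next
      case sm
      have "norm (df i v - df i xs) \<le> L * norm (v - xs)" by (rule lf)
      then have "(norm (df i v - df i xs))\<^sup>2 \<le> (L * norm (v - xs))\<^sup>2"
        by (intro power_mono) auto
      then show ?thesis using sm by (simp add: power_mult_distrib power2_eq_square mult_ac)
    qed
  qed
  let ?V = "lyap n \<alpha> p1 p4 df xs"
  have step: "(\<Sum>j<n. ?V (finito_step n \<alpha> df st j)) \<le> real n * \<rho>\<^sup>2 * ?V st" for st
  proof -
    obtain x y where st: "st = (x, y)" by (cases st)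
    define v where "v = (1 / real n) *\<^sub>R (\<Sum>i<n. x i) - \<alpha> *\<^sub>R (\<Sum>i<n. y i)"
    define a where "a i = x i - xs" for i
    define b where "b i = y i - df i xs" for i
    define c where "c i = df i v - df i xs" for i
    define u where "u = v - xs"
    have hu: "u = (1 / real n) *\<^sub>R (\<Sum>j<n. a j) - \<alpha> *\<^sub>R (\<Sum>j<n. b j)"
    proof -
      have "(\<Sum>j<n. a j) = (\<Sum>i<n. x i) - real n *\<^sub>R xs" unfolding a_def by (simp add: sum_subtractf sum_constant_scaleR)
      moreover have "(\<Sum>j<n. b j) = (\<Sum>i<n. y i)" unfolding b_def by (simp add: sum_subtractf sdxs)
      ultimately show ?thesis unfolding u_def v_def using N unfolding N_def by (simp add: scaleR_diff_right)
    qed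
    have Gv: "G v = (1 / real n) *\<^sub>R (\<Sum>j<n. c j)"
      unfolding G_def c_def by (simp add: sum_subtractf sdxs)
    have S: "- 2 * m * L * (norm u)\<^sup>2 + 2 * (L + m) * inner u ((1 / real n) *\<^sub>R (\<Sum>j<n. c j))
             - 2 * (norm ((1 / real n) *\<^sub>R (\<Sum>j<n. c j)))\<^sup>2 \<ge> 0"
      using Sineq[of v] unfolding Gv u_def .
    have T: "(L - \<gamma>) * inner u (c j) - (norm (c j))\<^sup>2 + \<gamma> * L * (norm u)\<^sup>2 \<ge> 0" if "j < n" for j
      using Tineq_i[OF that, of v] unfolding u_def c_def .
    have V0: "?V st = p4 * (\<Sum>i<n. (norm (a i))\<^sup>2) + p1 * (\<Sum>i<n. (norm (b i))\<^sup>2) + (norm u)\<^sup>2"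
      unfolding st lyap_def a_def b_def u_def v_def by (simp add: Let_def)
    have Vj: "?V (finito_step n \<alpha> df st j)
        = p4 * ((\<Sum>i<n. (norm (a i))\<^sup>2) - (norm (a j))\<^sup>2 + (norm u)\<^sup>2)
              + p1 * ((\<Sum>i<n. (norm (b i))\<^sup>2) - (norm (b j))\<^sup>2 + (norm (c j))\<^sup>2)
              + (norm (u + (1 / real n) *\<^sub>R (u - a j) - \<alpha> *\<^sub>R (c j - b j)))\<^sup>2" if j: "j < n" for j
    proof -
      have sx: "(\<Sum>i<n. (x(j := v)) i) = (\<Sum>i<n. x i) - x j + v"
        using sum_upd[OF j, of "\<lambda>i z. z" x v] by simp
      have sy: "(\<Sum>i<n. (y(j := df j v)) i) = (\<Sum>i<n. y i) - y j + df j v"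
        using sum_upd[OF j, of "\<lambda>i z. z" y "df j v"] by simp
      have nx: "(\<Sum>i<n. (norm ((x(j := v)) i - xs))\<^sup>2) = (\<Sum>i<n. (norm (a i))\<^sup>2) - (norm (a j))\<^sup>2 + (norm u)\<^sup>2"
        using sum_upd[OF j, of "\<lambda>i z. (norm (z - xs))\<^sup>2" x v] unfolding a_def u_def by simp
      have ny: "(\<Sum>i<n. (norm ((y(j := df j v)) i - df i xs))\<^sup>2) = (\<Sum>i<n. (norm (b i))\<^sup>2) - (norm (b j))\<^sup>2 + (norm (c j))\<^sup>2"
        using sum_upd[OF j, of "\<lambda>i z. (norm (z - df i xs))\<^sup>2" y "df j v"] unfolding b_def c_def by simp
      have nv: "(1 / real n) *\<^sub>R ((\<Sum>i<n. x i) - x j + v) - \<alpha> *\<^sub>R ((\<Sum>i<n. y i) - y j + df j v) - xs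
              = u + (1 / real n) *\<^sub>R (u - a j) - \<alpha> *\<^sub>R (c j - b j)"
        unfolding u_def a_def b_def c_def v_def by (simp add: algebra_simps)
      show ?thesis
        unfolding st finito_step_def lyap_def Let_def fst_conv snd_conv v_def[symmetric] sx sy nx ny nv
        by simp
    qed
    have "(\<Sum>j<n. ?V (finito_step n \<alpha> df st j))
        = (\<Sum>j<n. p4 * ((\<Sum>i<n. (norm (a i))\<^sup>2) - (norm (a j))\<^sup>2 + (norm u)\<^sup>2)
              + p1 * ((\<Sum>i<n. (norm (b i))\<^sup>2) - (norm (b j))\<^sup>2 + (norm (c j))\<^sup>2)
              + (norm (u + (1 / real n) *\<^sub>R (u - a j) - \<alpha> *\<^sub>R (c j - b j)))\<^sup>2)"
      by (rule sum.cong) (simp_all add: Vj)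
    also have "\<dots> \<le> real n * \<rho>\<^sup>2 * (p4 * (\<Sum>i<n. (norm (a i))\<^sup>2) + p1 * (\<Sum>i<n. (norm (b i))\<^sup>2) + (norm u)\<^sup>2)"
      by (rule core[OF n hu S T rho(1) p_pos lam c1 c2 c3 c4])
    finally show ?thesis unfolding V0 .
  qed
  have fin_app: "finito n \<alpha> df st0 (js @ [j]) = finito_step n \<alpha> df (finito n \<alpha> df st0 js) j" for st0 js j
    unfolding finito_def by simp
  define W where "W js = ?V (finito n \<alpha> df (x0, y0) js)" for js
  have "expect_uniform n k W \<le> (\<rho>\<^sup>2) ^ k * ?V (x0, y0)"
  proof (induction k)
    case 0
    have "{js. length js = 0 \<and> set js \<subseteq> {..<n}} = {[]}" by auto
    then show ?case unfolding expect_uniform_def W_def finito_def by simp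
  next
    case (Suc k)
    let ?Lk = "{js. length js = k \<and> set js \<subseteq> {..<n}}"
    have "(\<Sum>js\<in>{js. length js = Suc k \<and> set js \<subseteq> {..<n}}. W js) = (\<Sum>js\<in>?Lk. \<Sum>j<n. W (js @ [j]))"
      by (rule lists_Suc)
    also have "\<dots> \<le> (\<Sum>js\<in>?Lk. real n * \<rho>\<^sup>2 * W js)"
      by (rule sum_mono) (unfold W_def fin_app, rule step)
    also have "\<dots> = real n * \<rho>\<^sup>2 * (\<Sum>js\<in>?Lk. W js)" by (simp add: sum_distrib_left)
    finally have 1: "(\<Sum>js\<in>{js. length js = Suc k \<and> set js \<subseteq> {..<n}}. W js) \<le> real n * \<rho>\<^sup>2 * (\<Sum>js\<in>?Lk. W js)" .
    have "expect_uniform n (Suc k) W \<le> real n * \<rho>\<^sup>2 * (\<Sum>js\<in>?Lk. W js) / real n ^ Suc k"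
      unfolding expect_uniform_def by (rule divide_right_mono[OF 1]) simp
    also have "\<dots> = \<rho>\<^sup>2 * expect_uniform n k W"
      unfolding expect_uniform_def using N unfolding N_def by (simp add: field_simps)
    also have "\<dots> \<le> \<rho>\<^sup>2 * ((\<rho>\<^sup>2) ^ k * ?V (x0, y0))"
      using Suc.IH by (simp add: mult_left_mono)
    finally show ?case by simp
  qed
  then show ?thesis unfolding W_def .
qed

end
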